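(* Let $\Phi=(V,\mathcal C)$ be a $(k,d,s)$-CNF formula satisfying $k\ge\log d+\log k+\log(2\mathrm e)+s$, and let $c^*\notin\mathcal C$ be a clause on $k$ distinct variables with forbidden assignment $\sigma^*$. If there exists a clause $c'\in\mathcal C$ with $\mathrm{vbl}(c')=\mathrm{vbl}(c^* )$ but $c'\ne c^*$, then $$\Pr_{X\sim\mu_\Phi}[X_{\mathrm{vbl}(c^* )}=\sigma^*]\ge\Big(1-\frac12\exp\Big(\frac1k\Big)\Big)^k.$$
   Context: $\log$ denotes $\log_2$. A $(k,d,s)$-CNF formula is a CNF formula in which every clause contains exactly $k$ distinct variables, every variable appears in at most $d$ clauses, and any two distinct clauses share at most $s$ variables. $\mathrm{vbl}(c)$ is the variable set of clause $c$; the forbidden assignment of a clause is the unique assignment of its variables violating it. $\mu_\Phi$ is the uniform distribution over satisfying assignments of $\Phi$. *)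

theory Defs
  imports Complex_Main "HOL-Library.FuncSet"
begin

text \<open>A literal is a pair (x, b), satisfied by an assignment X iff X x = b.
  A clause is a finite set of literals on pairwise distinct variables.\<close>

type_synonym 'v clause = "('v \<times> bool) set"

definition is_clause :: "'v clause \<Rightarrow> bool" where
  "is_clause c \<longleftrightarrow> finite c \<and> inj_on fst c"

definition vbl :: "'v clause \<Rightarrow> 'v set" where
  "vbl c = fst ` c"

definition violates :: "('v \<Rightarrow> bool) \<Rightarrow> 'v clause \<Rightarrow> bool" where
  "violates X c \<longleftrightarrow> (\<forall>(x, b) \<in> c. X x = (\<not> b))"

definition kds_CNF :: "nat \<Rightarrow> nat \<Rightarrow> nat \<Rightarrow> 'v set \<Rightarrow> 'v clause set \<Rightarrow> bool" where
  "kds_CNF k d s V C \<longleftrightarrow>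
     finite V \<and>
     (\<forall>c\<in>C. is_clause c \<and> card (vbl c) = k \<and> vbl c \<subseteq> V) \<and>
     (\<forall>x\<in>V. card {c\<in>C. x \<in> vbl c} \<le> d) \<and>
     (\<forall>c\<in>C. \<forall>c'\<in>C. c \<noteq> c' \<longrightarrow> card (vbl c \<inter> vbl c') \<le> s)"

definition sat_assignments :: "'v set \<Rightarrow> 'v clause set \<Rightarrow> ('v \<Rightarrow> bool) set" where
  "sat_assignments V C = {X \<in> V \<rightarrow>\<^sub>E (UNIV :: bool set). \<forall>c\<in>C. \<not> violates X c}"

definition prob_forbidden :: "'v set \<Rightarrow> 'v clause set \<Rightarrow> 'v clause \<Rightarrow> real" where
  "prob_forbidden V C c =
     real (card {X \<in> sat_assignments V C. violates X c}) / real (card (sat_assignments V C))"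

end

theory Submission
  imports Defs
begin


definition lP :: "'a set \<Rightarrow> 'a set \<Rightarrow> real" where
  "lP \<Omega> E = real (card (\<Omega> \<inter> E)) / real (card \<Omega>)"
definition lN :: "('i \<Rightarrow> 'a set) \<Rightarrow> 'i set \<Rightarrow> 'a set" where
  "lN A J = {w. \<forall>j\<in>J. w \<notin> A j}"

lemma lP_nonneg: "0 \<le> lP \<Omega> E"
  by (simp add: lP_def)

lemma lP_mono: "finite \<Omega> \<Longrightarrow> E \<subseteq> E' \<Longrightarrow> lP \<Omega> E \<le> lP \<Omega> E'"
  unfolding lP_def
  by (intro divide_right_mono) (auto intro: card_mono)

lemma lP_split: "finite \<Omega> \<Longrightarrow> lP \<Omega> E = lP \<Omega> (E \<inter> D) + lP \<Omega> (E - D)"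
proof -
  assume f: "finite \<Omega>"
  have "\<Omega> \<inter> E = (\<Omega> \<inter> (E \<inter> D)) \<union> (\<Omega> \<inter> (E - D))" by blast
  moreover have "card ((\<Omega> \<inter> (E \<inter> D)) \<union> (\<Omega> \<inter> (E - D))) = card (\<Omega> \<inter> (E \<inter> D)) + card (\<Omega> \<inter> (E - D))"
    using f by (intro card_Un_disjoint) auto
  ultimately show ?thesis unfolding lP_def by (simp add: add_divide_distrib)
qed

lemma lN_insert: "lN A (insert j J) = lN A J - A j"
  by (auto simp: lN_def)
lemma lN_mono: "J \<subseteq> J' \<Longrightarrow> lN A J' \<subseteq> lN A J"
  by (auto simp: lN_def)
lemma lN_empty: "lN A {} = UNIV"
  by (auto simp: lN_def)
lemma lP_UNIV: "finite \<Omega> \<Longrightarrow> \<Omega> \<noteq> {} \<Longrightarrow> lP \<Omega> UNIV = 1"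
  by (simp add: lP_def)

lemma lll_prod:
  assumes fin: "finite \<Omega>" and x: "0 \<le> x" "x \<le> 1" and fJ: "finite J"
    and H: "\<And>J' i. J' \<subset> J \<Longrightarrow> i \<in> J - J' \<Longrightarrow> lP \<Omega> (A i \<inter> lN A J') \<le> x * lP \<Omega> (lN A J')"
    and "J1 \<subseteq> J" "J0 \<subseteq> J" "J0 \<inter> J1 = {}"
  shows "lP \<Omega> (lN A J0) * (1-x)^card J1 \<le> lP \<Omega> (lN A (J0 \<union> J1))"
proof -
  have "finite J1" using assms(6) fJ finite_subset by blast
  then show ?thesis using assms(6-8)
  proof (induction J1 rule: finite_induct)
    case empty then show ?case by simp
  next
    case (insert j F)
    define M where "M = J0 \<union> F"
    have IH: "lP \<Omega> (lN A J0) * (1-x)^card F \<le> lP \<Omega> (lN A M)"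
      using insert M_def by auto
    have MJ: "M \<subset> J" using insert M_def by auto
    have jJ: "j \<in> J - M" using insert M_def by auto
    have h: "lP \<Omega> (A j \<inter> lN A M) \<le> x * lP \<Omega> (lN A M)" using H[OF MJ jJ] .
    have eq: "lN A (J0 \<union> insert j F) = lN A M - A j"
      unfolding M_def by (simp add: lN_insert[symmetric])
    have sp: "lP \<Omega> (lN A M) = lP \<Omega> (lN A M \<inter> A j) + lP \<Omega> (lN A M - A j)"
      using lP_split[OF fin] .
    have "lP \<Omega> (lN A M \<inter> A j) = lP \<Omega> (A j \<inter> lN A M)" by (simp add: Int_commute)
    then have s1: "(1 - x) * lP \<Omega> (lN A M) \<le> lP \<Omega> (lN A M - A j)" using sp h by (simp add: algebra_simps)
    have "lP \<Omega> (lN A J0) * (1-x)^card (insert j F) = (1 - x) * (lP \<Omega> (lN A J0) * (1-x)^card F)"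
      using insert by simp
    also have "\<dots> \<le> (1 - x) * lP \<Omega> (lN A M)"
      using IH x by (intro mult_left_mono) auto
    also have "\<dots> \<le> lP \<Omega> (lN A (J0 \<union> insert j F))" using s1 eq by simp
    finally show ?case .
  qed
qed

lemma lll_key:
  assumes fin: "finite \<Omega>" and fI: "finite I" and x: "0 \<le> x" "x \<le> 1"
   and GI: "\<And>i. i \<in> I \<Longrightarrow> \<Gamma> i \<subseteq> I"
   and indep: "\<And>i J. i \<in> I \<Longrightarrow> J \<subseteq> I - \<Gamma> i - {i} \<Longrightarrow> lP \<Omega> (A i \<inter> lN A J) = lP \<Omega> (A i) * lP \<Omega> (lN A J)"
   and cond: "\<And>i. i \<in> I \<Longrightarrow> lP \<Omega> (A i) \<le> x * (1-x)^card (\<Gamma> i)"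
  shows "J \<subseteq> I \<Longrightarrow> i \<in> I - J \<Longrightarrow> lP \<Omega> (A i \<inter> lN A J) \<le> x * lP \<Omega> (lN A J)"
proof (induction "card J" arbitrary: J i rule: less_induct)
  case less
  have fJ: "finite J" using less.prems fI finite_subset by blast
  have H: "lP \<Omega> (A i' \<inter> lN A J') \<le> x * lP \<Omega> (lN A J')" if "J' \<subset> J" "i' \<in> J - J'" for J' i'
  proof -
    have "card J' < card J" using that fJ psubset_card_mono by blast
    then show ?thesis using less.hyps[of J' i'] that less.prems by blast
  qed
  define J1 where "J1 = J \<inter> \<Gamma> i"
  define J2 where "J2 = J - \<Gamma> i"
  have iI: "i \<in> I" "i \<notin> J" using less.prems by auto
  have fG: "finite (\<Gamma> i)" using GI[OF iI(1)] fI finite_subset by blast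
  have "lP \<Omega> (A i \<inter> lN A J) \<le> lP \<Omega> (A i \<inter> lN A J2)"
    using fin lN_mono[of J2 J A] unfolding J2_def by (intro lP_mono) auto
  also have "\<dots> = lP \<Omega> (A i) * lP \<Omega> (lN A J2)"
    using indep[OF iI(1), of J2] less.prems unfolding J2_def by auto
  also have "\<dots> \<le> x * (1-x)^card (\<Gamma> i) * lP \<Omega> (lN A J2)"
    using cond[OF iI(1)] by (intro mult_right_mono) (auto simp: lP_nonneg)
  also have "\<dots> \<le> x * (1-x)^card J1 * lP \<Omega> (lN A J2)"
  proof -
    have "card J1 \<le> card (\<Gamma> i)" unfolding J1_def using fG by (intro card_mono) auto
    then have "(1-x)^card (\<Gamma> i) \<le> (1-x)^card J1" using x by (intro power_decreasing) auto
    then show ?thesis using x by (intro mult_right_mono mult_left_mono) (auto simp: lP_nonneg)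
  qed
  also have "\<dots> \<le> x * lP \<Omega> (lN A J)"
  proof -
    have "lP \<Omega> (lN A J2) * (1-x)^card J1 \<le> lP \<Omega> (lN A (J2 \<union> J1))"
      using lll_prod[OF fin x fJ H, of J1 J2] unfolding J1_def J2_def by auto
    moreover have "J2 \<union> J1 = J" unfolding J1_def J2_def by auto
    ultimately have "x * (lP \<Omega> (lN A J2) * (1-x)^card J1) \<le> x * lP \<Omega> (lN A J)"
      using x by (intro mult_left_mono) auto
    then show ?thesis by (simp add: algebra_simps)
  qed
  finally show ?case .
qed

lemma lll_final:
  assumes fin: "finite \<Omega>" and fI: "finite I" and x: "0 \<le> x" "x \<le> 1"
   and GI: "\<And>i. i \<in> I \<Longrightarrow> \<Gamma> i \<subseteq> I"
   and indep: "\<And>i J. i \<in> I \<Longrightarrow> J \<subseteq> I - \<Gamma> i - {i} \<Longrightarrow> lP \<Omega> (A i \<inter> lN A J) = lP \<Omega> (A i) * lP \<Omega> (lN A J)"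
   and cond: "\<And>i. i \<in> I \<Longrightarrow> lP \<Omega> (A i) \<le> x * (1-x)^card (\<Gamma> i)"
   and G: "G \<subseteq> I"
   and indepB: "\<And>J. J \<subseteq> I - G \<Longrightarrow> lP \<Omega> (B \<inter> lN A J) = lP \<Omega> B * lP \<Omega> (lN A J)"
  shows "lP \<Omega> (B \<inter> lN A I) * (1-x)^card G \<le> lP \<Omega> B * lP \<Omega> (lN A I)"
proof -
  have H: "lP \<Omega> (A i' \<inter> lN A J') \<le> x * lP \<Omega> (lN A J')" if "J' \<subset> I" "i' \<in> I - J'" for J' i'
    using lll_key[OF fin fI x GI indep cond, of J' i'] that by auto
  have p: "lP \<Omega> (lN A (I - G)) * (1-x)^card G \<le> lP \<Omega> (lN A ((I - G) \<union> G))"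
    using lll_prod[OF fin x fI H, of G "I - G"] G by auto
  have "(I - G) \<union> G = I" using G by auto
  have "lP \<Omega> (B \<inter> lN A I) \<le> lP \<Omega> (B \<inter> lN A (I - G))"
    using fin lN_mono[of "I - G" I A] by (intro lP_mono) auto
  also have "\<dots> = lP \<Omega> B * lP \<Omega> (lN A (I - G))" using indepB by auto
  finally have "lP \<Omega> (B \<inter> lN A I) * (1-x)^card G \<le> lP \<Omega> B * lP \<Omega> (lN A (I - G)) * (1-x)^card G"
    using x by (intro mult_right_mono) auto
  also have "\<dots> \<le> lP \<Omega> B * lP \<Omega> (lN A I)"
    using p \<open>(I - G) \<union> G = I\<close> by (simp add: mult.assoc mult_left_mono lP_nonneg)
  finally show ?thesis .
qed

lemma lll_pos:
  assumes fin: "finite \<Omega>" and ne: "\<Omega> \<noteq> {}" and fI: "finite I" and x: "0 \<le> x" "x \<le> 1"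
   and GI: "\<And>i. i \<in> I \<Longrightarrow> \<Gamma> i \<subseteq> I"
   and indep: "\<And>i J. i \<in> I \<Longrightarrow> J \<subseteq> I - \<Gamma> i - {i} \<Longrightarrow> lP \<Omega> (A i \<inter> lN A J) = lP \<Omega> (A i) * lP \<Omega> (lN A J)"
   and cond: "\<And>i. i \<in> I \<Longrightarrow> lP \<Omega> (A i) \<le> x * (1-x)^card (\<Gamma> i)"
  shows "(1-x)^card I \<le> lP \<Omega> (lN A I)"
proof -
  have H: "lP \<Omega> (A i' \<inter> lN A J') \<le> x * lP \<Omega> (lN A J')" if "J' \<subset> I" "i' \<in> I - J'" for J' i'
    using lll_key[OF fin fI x GI indep cond, of J' i'] that by auto
  have "lP \<Omega> (lN A {}) * (1-x)^card I \<le> lP \<Omega> (lN A ({} \<union> I))"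
    using lll_prod[OF fin x fI H, of I "{}"] by auto
  then show ?thesis using lP_UNIV[OF fin ne] by (simp add: lN_empty)
qed



definition mg :: "'v set \<Rightarrow> ('v \<Rightarrow> bool) \<Rightarrow> ('v \<Rightarrow> bool) \<Rightarrow> 'v \<Rightarrow> bool" where
  "mg T X Y = (\<lambda>v. if v \<in> T then X v else Y v)"

lemma merge_card:
  fixes \<Omega> :: "('v \<Rightarrow> bool) set"
  assumes fin: "finite \<Omega>" and closed: "\<And>X Y. X \<in> \<Omega> \<Longrightarrow> Y \<in> \<Omega> \<Longrightarrow> mg T X Y \<in> \<Omega>"
    and dB: "\<And>X Y. (\<forall>v\<in>T. X v = Y v) \<Longrightarrow> X \<in> B \<longleftrightarrow> Y \<in> B"
    and dE: "\<And>X Y. (\<forall>v. v \<notin> T \<longrightarrow> X v = Y v) \<Longrightarrow> X \<in> E \<longleftrightarrow> Y \<in> E"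
  shows "card (\<Omega> \<inter> B) * card (\<Omega> \<inter> E) = card (\<Omega> \<inter> (B \<inter> E)) * card \<Omega>"
proof -
  define f where "f = (\<lambda>(X, Y). (mg T X Y, mg T Y X))"
  have inv: "f (f p) = p" for p
    by (cases p) (auto simp: f_def mg_def fun_eq_iff)
  have m1: "mg T X Y \<in> B" if "X \<in> B" for X Y
    using dB[of "mg T X Y" X] that by (auto simp: mg_def)
  have m2: "mg T Y X \<in> E" if "X \<in> E" for X Y
    using dE[of "mg T Y X" X] that by (auto simp: mg_def)
  have "bij_betw f ((\<Omega> \<inter> B) \<times> (\<Omega> \<inter> E)) ((\<Omega> \<inter> (B \<inter> E)) \<times> \<Omega>)"
  proof (rule bij_betw_byWitness[where f' = f])
    show "\<forall>a\<in>(\<Omega> \<inter> B) \<times> (\<Omega> \<inter> E). f (f a) = a" using inv by blast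
    show "\<forall>a\<in>(\<Omega> \<inter> (B \<inter> E)) \<times> \<Omega>. f (f a) = a" using inv by blast
    show "f ` ((\<Omega> \<inter> B) \<times> (\<Omega> \<inter> E)) \<subseteq> (\<Omega> \<inter> (B \<inter> E)) \<times> \<Omega>"
    proof
      fix q assume "q \<in> f ` ((\<Omega> \<inter> B) \<times> (\<Omega> \<inter> E))"
      then obtain X Y where q: "q = f (X, Y)" "X \<in> \<Omega>" "X \<in> B" "Y \<in> \<Omega>" "Y \<in> E" by auto
      have "mg T X Y \<in> E" using m2[of Y X] q(5) dE[of "mg T X Y" "mg T Y Y"]
        by (auto simp: mg_def)
      then show "q \<in> (\<Omega> \<inter> (B \<inter> E)) \<times> \<Omega>" using q closed m1 by (auto simp: f_def)
    qed
    show "f ` ((\<Omega> \<inter> (B \<inter> E)) \<times> \<Omega>) \<subseteq> (\<Omega> \<inter> B) \<times> (\<Omega> \<inter> E)"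
    proof
      fix q assume "q \<in> f ` ((\<Omega> \<inter> (B \<inter> E)) \<times> \<Omega>)"
      then obtain X Y where q: "q = f (X, Y)" "X \<in> \<Omega>" "X \<in> B" "X \<in> E" "Y \<in> \<Omega>" by auto
      show "q \<in> (\<Omega> \<inter> B) \<times> (\<Omega> \<inter> E)" using q closed m1 m2 by (auto simp: f_def)
    qed
  qed
  then have "card ((\<Omega> \<inter> B) \<times> (\<Omega> \<inter> E)) = card ((\<Omega> \<inter> (B \<inter> E)) \<times> \<Omega>)"
    by (rule bij_betw_same_card)
  then show ?thesis by (simp add: card_cartesian_product)
qed

lemma merge_lP:
  fixes \<Omega> :: "('v \<Rightarrow> bool) set"
  assumes fin: "finite \<Omega>" and closed: "\<And>X Y. X \<in> \<Omega> \<Longrightarrow> Y \<in> \<Omega> \<Longrightarrow> mg T X Y \<in> \<Omega>"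
    and dB: "\<And>X Y. (\<forall>v\<in>T. X v = Y v) \<Longrightarrow> X \<in> B \<longleftrightarrow> Y \<in> B"
    and dE: "\<And>X Y. (\<forall>v. v \<notin> T \<longrightarrow> X v = Y v) \<Longrightarrow> X \<in> E \<longleftrightarrow> Y \<in> E"
  shows "lP \<Omega> (B \<inter> E) = lP \<Omega> B * lP \<Omega> E"
proof (cases "card \<Omega> = 0")
  case True then show ?thesis by (simp add: lP_def)
next
  case False
  have "real (card (\<Omega> \<inter> B)) * real (card (\<Omega> \<inter> E)) = real (card (\<Omega> \<inter> (B \<inter> E))) * real (card \<Omega>)"
    using merge_card[OF assms] by (metis of_nat_mult)
  then show ?thesis using False unfolding lP_def by (simp add: field_simps)
qed

definition OmF :: "'v set \<Rightarrow> 'v set \<Rightarrow> ('v \<Rightarrow> bool) \<Rightarrow> ('v \<Rightarrow> bool) set" where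
  "OmF V F \<sigma> = {X \<in> V \<rightarrow>\<^sub>E (UNIV :: bool set). \<forall>u\<in>F. X u = \<sigma> u}"

lemma OmF_finite: "finite V \<Longrightarrow> finite (OmF V F \<sigma>)"
proof -
  assume "finite V"
  then have "finite (V \<rightarrow>\<^sub>E (UNIV :: bool set))" by (intro finite_PiE) auto
  then show ?thesis unfolding OmF_def by auto
qed

lemma OmF_ne: "F \<subseteq> V \<Longrightarrow> OmF V F \<sigma> \<noteq> {}"
proof -
  assume "F \<subseteq> V"
  then have "(\<lambda>v. if v \<in> V then \<sigma> v else undefined) \<in> OmF V F \<sigma>"
    unfolding OmF_def by auto
  then show ?thesis by blast
qed

lemma OmF_closed: "X \<in> OmF V F \<sigma> \<Longrightarrow> Y \<in> OmF V F \<sigma> \<Longrightarrow> mg T X Y \<in> OmF V F \<sigma>"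
  unfolding OmF_def mg_def by (auto simp: PiE_def extensional_def)

lemma half_card:
  assumes fV: "finite V" and u: "u \<in> V" "u \<notin> F"
  shows "2 * card (OmF V F \<sigma> \<inter> {X. X u = b}) = card (OmF V F \<sigma>)"
proof -
  let ?O = "OmF V F \<sigma>"
  define fl where "fl = (\<lambda>X::'a \<Rightarrow> bool. X(u := \<not> X u))"
  have inv: "fl (fl X) = X" for X by (auto simp: fl_def)
  have cl: "fl X \<in> ?O" if "X \<in> ?O" for X
    using that u unfolding OmF_def fl_def by (auto simp: PiE_def extensional_def)
  have "bij_betw fl (?O \<inter> {X. X u = b}) (?O \<inter> {X. X u = (\<not> b)})"
    by (rule bij_betw_byWitness[where f' = fl]) (auto simp: inv cl, auto simp: fl_def)
  then have c1: "card (?O \<inter> {X. X u = b}) = card (?O \<inter> {X. X u = (\<not> b)})"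
    by (rule bij_betw_same_card)
  have "?O = (?O \<inter> {X. X u = b}) \<union> (?O \<inter> {X. X u = (\<not> b)})" by auto
  moreover have "card ((?O \<inter> {X. X u = b}) \<union> (?O \<inter> {X. X u = (\<not> b)})) = card (?O \<inter> {X. X u = b}) + card (?O \<inter> {X. X u = (\<not> b)})"
    using OmF_finite[OF fV] by (intro card_Un_disjoint) auto
  ultimately show ?thesis using c1 by simp
qed

lemma prod_card:
  assumes fV: "finite V" and FV: "F \<subseteq> V" and fU: "finite U" and U: "U \<subseteq> V - F"
  shows "card (OmF V F \<sigma> \<inter> {X. \<forall>u\<in>U. X u = g u}) * 2 ^ card U = card (OmF V F \<sigma>)"
  using fU U
proof (induction U rule: finite_induct)
  case empty then show ?case by simp
next
  case (insert u U)
  let ?O = "OmF V F \<sigma>"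
  let ?B = "{X. X u = g u}"
  let ?E = "{X. \<forall>u\<in>U. X u = g u}"
  have IH: "card (?O \<inter> ?E) * 2 ^ card U = card ?O" using insert by auto
  have h: "2 * card (?O \<inter> ?B) = card ?O" using half_card[OF fV, of u F] insert by auto
  have m: "card (?O \<inter> ?B) * card (?O \<inter> ?E) = card (?O \<inter> (?B \<inter> ?E)) * card ?O"
  proof (rule merge_card[where T = "{u}"])
    show "X \<in> ?E \<longleftrightarrow> Y \<in> ?E" if "\<forall>v. v \<notin> {u} \<longrightarrow> X v = Y v" for X Y
    proof -
      have "\<forall>w\<in>U. X w = Y w" using that insert.hyps(2) by auto
      then show ?thesis by auto
    qed
  qed (use OmF_finite[OF fV] OmF_closed in auto)
  have eq: "?B \<inter> ?E = {X. \<forall>v\<in>insert u U. X v = g v}" by auto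
  have pos: "card ?O > 0" using OmF_ne[OF FV] OmF_finite[OF fV] by (simp add: card_gt_0_iff)
  have "card (?O \<inter> (?B \<inter> ?E)) * 2 ^ card (insert u U) * card ?O
      = (2 * card (?O \<inter> ?B)) * (card (?O \<inter> ?E) * 2 ^ card U)"
    using m insert.hyps by (simp add: algebra_simps)
  also have "\<dots> = card ?O * card ?O" using h IH by simp
  finally have "card (?O \<inter> (?B \<inter> ?E)) * 2 ^ card (insert u U) = card ?O"
    using pos by simp
  then show ?case using eq by simp
qed



definition fv :: "'v clause \<Rightarrow> 'v \<Rightarrow> bool" where "fv c u = ((u, False) \<in> c)"

lemma fv_mem: "is_clause c \<Longrightarrow> (x, b) \<in> c \<Longrightarrow> fv c x = (\<not> b)"
  unfolding fv_def is_clause_def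
  by (cases b) (auto dest: inj_onD[where x = "(x, True)" and y = "(x, False)"])

lemma viol_iff: "is_clause c \<Longrightarrow> violates X c \<longleftrightarrow> (\<forall>u\<in>vbl c. X u = fv c u)"
  unfolding violates_def vbl_def using fv_mem[of c] by fastforce

lemma viol_cong: "(\<forall>u\<in>vbl c. X u = Y u) \<Longrightarrow> violates X c \<longleftrightarrow> violates Y c"
  unfolding violates_def vbl_def by force

lemma clause_repr: "is_clause c \<Longrightarrow> c = (\<lambda>u. (u, \<not> fv c u)) ` vbl c"
  unfolding vbl_def using fv_mem[of c] by force

lemma clause_eq: "is_clause c \<Longrightarrow> is_clause c2 \<Longrightarrow> vbl c = vbl c2 \<Longrightarrow> (\<forall>u\<in>vbl c. fv c u = fv c2 u) \<Longrightarrow> c = c2"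
proof -
  assume a: "is_clause c" "is_clause c2" "vbl c = vbl c2" "\<forall>u\<in>vbl c. fv c u = fv c2 u"
  have "(\<lambda>u. (u, \<not> fv c u)) ` vbl c = (\<lambda>u. (u, \<not> fv c2 u)) ` vbl c2"
    using a(3,4) by (intro image_cong) auto
  then show ?thesis using clause_repr[OF a(1)] clause_repr[OF a(2)] by simp
qed



locale setting =
  fixes k d s :: nat and V :: "'v set" and C :: "'v clause set" and cs c' :: "'v clause" and v1 :: 'v
  assumes kds: "kds_CNF k d s V C"
    and cls: "is_clause cs" and ck: "card (vbl cs) = k"
    and c'C: "c' \<in> C" and vc': "vbl c' = vbl cs"
    and v1: "v1 \<in> vbl cs" "fv c' v1 \<noteq> fv cs v1"
    and d1: "d \<ge> 1" and k2: "k \<ge> 2" and sk: "s < k"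
    and num1: "real (4 * d * k) \<le> 2 ^ (k - s)"
    and num2: "exp (- 1 / real k) \<le> (1 - 1 / (2 * real d * real k)) ^ d"
begin

definition "x = 1 / (2 * real d * real k)"
definition "A = (\<lambda>c. {X. violates X c})"
definition "\<Gamma> = (\<lambda>c. {c''\<in>C. c'' \<noteq> c \<and> vbl c'' \<inter> vbl c \<noteq> {}})"
definition "S = vbl cs"
definition "\<sigma> = fv cs"

lemma finV: "finite V" using kds unfolding kds_CNF_def by auto
lemma Cprops: "c \<in> C \<Longrightarrow> is_clause c \<and> card (vbl c) = k \<and> vbl c \<subseteq> V"
  using kds unfolding kds_CNF_def by auto
lemma deg: "u \<in> V \<Longrightarrow> card {c\<in>C. u \<in> vbl c} \<le> d"
  using kds unfolding kds_CNF_def by auto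
lemma inter: "c \<in> C \<Longrightarrow> c2 \<in> C \<Longrightarrow> c \<noteq> c2 \<Longrightarrow> card (vbl c \<inter> vbl c2) \<le> s"
  using kds unfolding kds_CNF_def by auto

lemma finC: "finite C"
proof -
  have "C \<subseteq> Pow (V \<times> (UNIV :: bool set))"
    using Cprops unfolding vbl_def by fastforce
  moreover have "finite (Pow (V \<times> (UNIV :: bool set)))" using finV by simp
  ultimately show ?thesis using finite_subset by blast
qed

lemma SV: "S \<subseteq> V" using Cprops[OF c'C] vc' unfolding S_def by auto
lemma finS: "finite S" using SV finV finite_subset by blast

lemma x_bounds: "0 \<le> x" "x \<le> 1/2"
proof -
  have "1 \<le> real d" "1 \<le> real k" using d1 k2 by auto
  then have dk: "1 * 1 \<le> real d * real k" by (intro mult_mono) auto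
  then show "0 \<le> x" "x \<le> 1/2" unfolding x_def using d1 k2
    by (auto simp: field_simps)
qed

lemma card_Gamma: "c \<in> C \<Longrightarrow> card (\<Gamma> c) \<le> k * d"
proof -
  assume cC: "c \<in> C"
  have sub: "\<Gamma> c \<subseteq> (\<Union>u\<in>vbl c. {c''\<in>C. u \<in> vbl c''})" unfolding \<Gamma>_def by auto
  have fvc: "finite (vbl c)" using Cprops[OF cC] finV finite_subset by blast
  have "card (\<Gamma> c) \<le> card (\<Union>u\<in>vbl c. {c''\<in>C. u \<in> vbl c''})"
    using sub finC by (intro card_mono) (auto intro: finite_subset)
  also have "\<dots> \<le> (\<Sum>u\<in>vbl c. card {c''\<in>C. u \<in> vbl c''})" by (rule card_UN_le[OF fvc])
  also have "\<dots> \<le> (\<Sum>u\<in>vbl c. d)" using Cprops[OF cC] deg by (intro sum_mono) auto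
  also have "\<dots> = k * d" using Cprops[OF cC] by simp
  finally show ?thesis .
qed

lemma cond_rhs: "c \<in> C \<Longrightarrow> 1 / real (4 * d * k) \<le> x * (1 - x) ^ card (\<Gamma> c)"
proof -
  assume cC: "c \<in> C"
  have "(1 - x) ^ (k * d) \<le> (1 - x) ^ card (\<Gamma> c)"
    using x_bounds card_Gamma[OF cC] by (intro power_decreasing) auto
  moreover have "1 + real (k * d) * (- x) \<le> (1 + - x) ^ (k * d)"
    using x_bounds by (intro Bernoulli_inequality) auto
  moreover have "1 + real (k * d) * (- x) = 1/2" unfolding x_def using d1 k2 by (simp add: field_simps)
  ultimately have "1/2 \<le> (1 - x) ^ card (\<Gamma> c)" by simp
  then have "x * (1/2) \<le> x * (1 - x) ^ card (\<Gamma> c)" using x_bounds by (intro mult_left_mono) auto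
  moreover have "x * (1/2) = 1 / real (4 * d * k)" unfolding x_def by simp
  ultimately show ?thesis by simp
qed

lemma indep:
  assumes c: "c \<in> C" and J: "J \<subseteq> C - \<Gamma> c - {c}"
  shows "lP (OmF V F \<sigma>) (A c \<inter> lN A J) = lP (OmF V F \<sigma>) (A c) * lP (OmF V F \<sigma>) (lN A J)"
proof (rule merge_lP[where T = "vbl c"])
  show "finite (OmF V F \<sigma>)" by (rule OmF_finite[OF finV])
  show "mg (vbl c) X Y \<in> OmF V F \<sigma>" if "X \<in> OmF V F \<sigma>" "Y \<in> OmF V F \<sigma>" for X Y
    using OmF_closed that by blast
  show "X \<in> A c \<longleftrightarrow> Y \<in> A c" if "\<forall>v\<in>vbl c. X v = Y v" for X Y
    using viol_cong[OF that] unfolding A_def by simp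
  show "X \<in> lN A J \<longleftrightarrow> Y \<in> lN A J" if h: "\<forall>v. v \<notin> vbl c \<longrightarrow> X v = Y v" for X Y
  proof -
    have "violates X j \<longleftrightarrow> violates Y j" if "j \<in> J" for j
    proof -
      have "vbl j \<inter> vbl c = {}" using J that unfolding \<Gamma>_def by auto
      then have "\<forall>u\<in>vbl j. X u = Y u" using h by auto
      then show ?thesis by (rule viol_cong)
    qed
    then show ?thesis unfolding lN_def A_def by auto
  qed
qed

lemma cond:
  assumes F: "F \<subseteq> S" "F = {} \<or> v1 \<in> F" and c: "c \<in> C"
  shows "lP (OmF V F \<sigma>) (A c) \<le> x * (1 - x) ^ card (\<Gamma> c)"
proof (cases "c = c' \<and> v1 \<in> F")
  case True
  have "OmF V F \<sigma> \<inter> A c = {}"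
  proof -
    have "\<not> violates X c'" if "X \<in> OmF V F \<sigma>" for X
    proof -
      have "X v1 = fv cs v1" using that True unfolding OmF_def \<sigma>_def by auto
      then have "X v1 \<noteq> fv c' v1" using v1 by auto
      then show ?thesis using viol_iff[of c' X] Cprops[OF c'C] v1 vc' by auto
    qed
    then show ?thesis using True unfolding A_def by auto
  qed
  then have "lP (OmF V F \<sigma>) (A c) = 0" unfolding lP_def by simp
  then show ?thesis using x_bounds by simp
next
  case False
  let ?O = "OmF V F \<sigma>"
  have cp: "is_clause c" "card (vbl c) = k" "vbl c \<subseteq> V" using Cprops[OF c] by auto
  have fvc: "finite (vbl c)" using cp finV finite_subset by blast
  have cF: "card (vbl c \<inter> F) \<le> s"
  proof (cases "c = c'")
    case True then have "F = {}" using False F by auto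
    then show ?thesis by simp
  next
    case ne: False
    have "card (vbl c \<inter> F) \<le> card (vbl c \<inter> vbl c')"
      using F fvc vc' unfolding S_def by (intro card_mono) auto
    also have "\<dots> \<le> s" using inter[OF c c'C ne] .
    finally show ?thesis .
  qed
  define U where "U = vbl c - F"
  have fU: "finite U" using fvc U_def by auto
  have cU: "k - s \<le> card U"
  proof -
    have "card U = card (vbl c) - card (vbl c \<inter> F)"
      unfolding U_def using fvc by (metis card_Diff_subset_Int finite_Int)
    then show ?thesis using cp cF by simp
  qed
  have FV: "F \<subseteq> V" using F SV by auto
  have pc: "card (?O \<inter> {X. \<forall>u\<in>U. X u = fv c u}) * 2 ^ card U = card ?O"
    using prod_card[OF finV FV fU] U_def cp by auto
  have Opos: "card ?O > 0" using OmF_ne[OF FV] OmF_finite[OF finV] by (simp add: card_gt_0_iff)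
  have "lP ?O (A c) \<le> lP ?O {X. \<forall>u\<in>U. X u = fv c u}"
    using viol_iff[OF cp(1)] OmF_finite[OF finV] unfolding A_def U_def by (intro lP_mono) auto
  also have "\<dots> = 1 / 2 ^ card U"
  proof -
    have "real (card (?O \<inter> {X. \<forall>u\<in>U. X u = fv c u})) * 2 ^ card U = real (card ?O)"
    proof -
      have "real (card (?O \<inter> {X. \<forall>u\<in>U. X u = fv c u}) * 2 ^ card U) = real (card ?O)"
        using pc by presburger
      then show ?thesis by simp
    qed
    then show ?thesis unfolding lP_def using Opos by (simp add: divide_simps)
  qed
  also have "\<dots> \<le> 1 / 2 ^ (k - s)" using cU by (intro divide_left_mono power_increasing) auto
  also have "\<dots> \<le> 1 / real (4 * d * k)"
    using num1 d1 k2 by (intro divide_left_mono) auto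
  also have "\<dots> \<le> x * (1 - x) ^ card (\<Gamma> c)" by (rule cond_rhs[OF c])
  finally show ?thesis .
qed

lemma GammaC: "\<Gamma> c \<subseteq> C" unfolding \<Gamma>_def by auto

lemma lll_hyps:
  assumes F: "F \<subseteq> S" "F = {} \<or> v1 \<in> F"
  shows "\<And>i J. i \<in> C \<Longrightarrow> J \<subseteq> C - \<Gamma> i - {i} \<Longrightarrow>
      lP (OmF V F \<sigma>) (A i \<inter> lN A J) = lP (OmF V F \<sigma>) (A i) * lP (OmF V F \<sigma>) (lN A J)"
    and "\<And>i. i \<in> C \<Longrightarrow> lP (OmF V F \<sigma>) (A i) \<le> x * (1 - x) ^ card (\<Gamma> i)"
  using indep cond[OF F] by auto

lemma pos: "card (OmF V {} \<sigma> \<inter> lN A C) > 0"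
proof -
  have "(1 - x) ^ card C \<le> lP (OmF V {} \<sigma>) (lN A C)"
    by (rule lll_pos[OF OmF_finite[OF finV] OmF_ne finC x_bounds(1) _ GammaC lll_hyps])
       (use x_bounds in auto)
  moreover have "(1 - x) ^ card C > 0" using x_bounds by simp
  ultimately have "lP (OmF V {} \<sigma>) (lN A C) > 0" by linarith
  then show ?thesis unfolding lP_def using OmF_finite[OF finV] by (auto simp: card_gt_0_iff)
qed

lemma step:
  assumes F: "F \<subseteq> S" "F = {} \<or> v1 \<in> F" and v: "v \<in> S" "v \<notin> F"
  shows "(1 - exp (1 / real k) / 2) * real (card (OmF V F \<sigma> \<inter> lN A C))
     \<le> real (card (OmF V (insert v F) \<sigma> \<inter> lN A C))"
proof -
  let ?O = "OmF V F \<sigma>"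
  let ?N = "lN A C"
  define B where "B = {X. X v \<noteq> \<sigma> v}"
  define G where "G = {c\<in>C. v \<in> vbl c}"
  define q where "q = exp (1 / real k) / 2"
  have FV: "F \<subseteq> V" using F SV by auto
  have vV: "v \<in> V" using v SV by auto
  have finO: "finite ?O" by (rule OmF_finite[OF finV])
  have Opos: "card ?O > 0" using OmF_ne[OF FV] finO by (simp add: card_gt_0_iff)
  have indepB: "lP ?O (B \<inter> lN A J) = lP ?O B * lP ?O (lN A J)" if J: "J \<subseteq> C - G" for J
  proof (rule merge_lP[where T = "{v}"])
    show "finite ?O" by (rule finO)
    show "mg {v} X Y \<in> ?O" if "X \<in> ?O" "Y \<in> ?O" for X Y
      using OmF_closed that by blast
    show "X \<in> B \<longleftrightarrow> Y \<in> B" if "\<forall>u\<in>{v}. X u = Y u" for X Y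
      using that unfolding B_def by auto
    show "X \<in> lN A J \<longleftrightarrow> Y \<in> lN A J" if h: "\<forall>u. u \<notin> {v} \<longrightarrow> X u = Y u" for X Y
    proof -
      have "violates X j \<longleftrightarrow> violates Y j" if "j \<in> J" for j
      proof -
        have "v \<notin> vbl j" using J that unfolding G_def by auto
        then have "\<forall>u\<in>vbl j. X u = Y u" using h by auto
        then show ?thesis by (rule viol_cong)
      qed
      then show ?thesis unfolding lN_def A_def by auto
    qed
  qed
  have fin: "lP ?O (B \<inter> ?N) * (1 - x) ^ card G \<le> lP ?O B * lP ?O ?N"
    by (rule lll_final[OF finO finC x_bounds(1) _ GammaC lll_hyps[OF F] _ indepB])
       (use x_bounds G_def in auto)
  have PB: "lP ?O B = 1/2"
  proof -
    have "?O \<inter> B = ?O \<inter> {X. X v = (\<not> \<sigma> v)}" unfolding B_def by auto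
    then have "2 * card (?O \<inter> B) = card ?O" using half_card[OF finV vV v(2)] by simp
    then have "2 * real (card (?O \<inter> B)) = real (card ?O)" by (metis of_nat_mult of_nat_numeral)
    then show ?thesis unfolding lP_def using Opos by (simp add: divide_simps)
  qed
  have cG: "card G \<le> d" unfolding G_def using deg[OF vV] .
  have "exp (- 1 / real k) \<le> (1 - x) ^ d" using num2 unfolding x_def by simp
  also have "\<dots> \<le> (1 - x) ^ card G" using cG x_bounds by (intro power_decreasing) auto
  finally have ex: "exp (- 1 / real k) \<le> (1 - x) ^ card G" .
  have "lP ?O (B \<inter> ?N) * exp (- 1 / real k) \<le> lP ?O (B \<inter> ?N) * (1 - x) ^ card G"
    using ex by (intro mult_left_mono) (auto simp: lP_nonneg)
  also have "\<dots> \<le> 1/2 * lP ?O ?N" using fin PB by simp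
  finally have h1: "lP ?O (B \<inter> ?N) * exp (- 1 / real k) \<le> 1/2 * lP ?O ?N" .
  have e1: "exp (- 1 / real k) * exp (1 / real k) = 1"
    by (simp add: exp_add[symmetric])
  have "lP ?O (B \<inter> ?N) = (lP ?O (B \<inter> ?N) * exp (- 1 / real k)) * exp (1 / real k)"
    using e1 by (simp add: mult.assoc)
  also have "\<dots> \<le> (1/2 * lP ?O ?N) * exp (1 / real k)"
    using h1 by (intro mult_right_mono) auto
  also have "\<dots> = q * lP ?O ?N" unfolding q_def by simp
  finally have "lP ?O (B \<inter> ?N) \<le> q * lP ?O ?N" .
  then have cB: "real (card (?O \<inter> (B \<inter> ?N))) \<le> q * real (card (?O \<inter> ?N))"
    unfolding lP_def using Opos by (simp add: divide_simps)
  have eqs: "?O \<inter> ?N = (?O \<inter> (B \<inter> ?N)) \<union> (OmF V (insert v F) \<sigma> \<inter> ?N)"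
    unfolding B_def OmF_def by auto
  have "card (?O \<inter> ?N) = card (?O \<inter> (B \<inter> ?N)) + card (OmF V (insert v F) \<sigma> \<inter> ?N)"
    unfolding eqs using finO OmF_finite[OF finV, of "insert v F" \<sigma>]
    by (intro card_Un_disjoint) (auto simp: B_def OmF_def)
  then have "real (card (?O \<inter> ?N)) = real (card (?O \<inter> (B \<inter> ?N))) + real (card (OmF V (insert v F) \<sigma> \<inter> ?N))"
    by simp
  then show ?thesis using cB unfolding q_def[symmetric] by (simp add: algebra_simps)
qed

lemma q_le: "exp (1 / real k) / 2 \<le> 1"
proof -
  have "exp (1 / real k) \<le> exp (1/2)" using k2 by (simp add: field_simps)
  then have "exp (1 / real k) \<le> 2" using exp_half_le2 by linarith
  then show ?thesis by simp
qed

lemma chain: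
  assumes "finite G" "G \<subseteq> S - {v1}"
  shows "(1 - exp (1 / real k) / 2) ^ Suc (card G) * real (card (OmF V {} \<sigma> \<inter> lN A C))
     \<le> real (card (OmF V (insert v1 G) \<sigma> \<inter> lN A C))"
  using assms
proof (induction G rule: finite_induct)
  case empty
  show ?case using step[of "{}" v1] v1 unfolding S_def by simp
next
  case (insert g G)
  let ?q = "1 - exp (1 / real k) / 2"
  have q0: "0 \<le> ?q" using q_le by simp
  have IH: "?q ^ Suc (card G) * real (card (OmF V {} \<sigma> \<inter> lN A C))
     \<le> real (card (OmF V (insert v1 G) \<sigma> \<inter> lN A C))" using insert by auto
  have st: "?q * real (card (OmF V (insert v1 G) \<sigma> \<inter> lN A C))
     \<le> real (card (OmF V (insert g (insert v1 G)) \<sigma> \<inter> lN A C))"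
    using insert v1 unfolding S_def by (intro step) (auto simp: S_def)
  have "?q ^ Suc (card (insert g G)) * real (card (OmF V {} \<sigma> \<inter> lN A C))
      = ?q * (?q ^ Suc (card G) * real (card (OmF V {} \<sigma> \<inter> lN A C)))"
    using insert by simp
  also have "\<dots> \<le> ?q * real (card (OmF V (insert v1 G) \<sigma> \<inter> lN A C))"
    using IH q0 by (intro mult_left_mono) auto
  also have "\<dots> \<le> real (card (OmF V (insert g (insert v1 G)) \<sigma> \<inter> lN A C))" by (rule st)
  also have "insert g (insert v1 G) = insert v1 (insert g G)" by auto
  finally show ?case .
qed

lemma result: "prob_forbidden V C cs \<ge> (1 - exp (1 / real k) / 2) ^ k"
proof -
  have sat: "sat_assignments V C = OmF V {} \<sigma> \<inter> lN A C"
    unfolding sat_assignments_def OmF_def lN_def A_def by auto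
  have vi: "{X \<in> sat_assignments V C. violates X cs} = OmF V S \<sigma> \<inter> lN A C"
    unfolding sat_assignments_def OmF_def lN_def A_def S_def \<sigma>_def using viol_iff[OF cls] by auto
  define G where "G = S - {v1}"
  have fG: "finite G" using finS G_def by auto
  have iG: "insert v1 G = S" using v1 G_def S_def by auto
  have cG: "Suc (card G) = k" using v1 finS ck G_def S_def
    by (metis card_Suc_Diff1)
  have c: "(1 - exp (1 / real k) / 2) ^ k * real (card (OmF V {} \<sigma> \<inter> lN A C))
     \<le> real (card (OmF V S \<sigma> \<inter> lN A C))"
    using chain[OF fG] G_def iG cG by auto
  have p: "real (card (OmF V {} \<sigma> \<inter> lN A C)) > 0" using pos by simp
  have "prob_forbidden V C cs = real (card (OmF V S \<sigma> \<inter> lN A C)) / real (card (OmF V {} \<sigma> \<inter> lN A C))"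
    unfolding prob_forbidden_def unfolding vi unfolding sat ..
  moreover have "(1 - exp (1 / real k) / 2) ^ k \<le> real (card (OmF V S \<sigma> \<inter> lN A C)) / real (card (OmF V {} \<sigma> \<inter> lN A C))"
    using c p by (subst pos_le_divide_eq) auto
  ultimately show ?thesis by simp
qed

end



lemma num2_lemma:
  fixes d k :: nat assumes "d \<ge> 1" "k \<ge> 1"
  shows "exp (- 1 / real k) \<le> (1 - 1 / (2 * real d * real k)) ^ d"
proof -
  define y where "y = 1 / (2 * real d * real k)"
  have "1 \<le> real d" "1 \<le> real k" using assms by auto
  then have "1 * 1 \<le> real d * real k" by (intro mult_mono) auto
  then have dk: "1 \<le> real d * real k" by simp
  have y0: "0 \<le> y" "y \<le> 1/2" unfolding y_def using dk by (auto simp: field_simps)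
  have "- y - 2 * y^2 \<le> ln (1 - y)" by (rule ln_one_minus_pos_lower_bound[OF y0])
  moreover have "- 2 * y \<le> - y - 2 * y^2" proof -
    have "y * (2 * y) \<le> y * 1" using y0 by (intro mult_left_mono) auto
    then show ?thesis by (simp add: power2_eq_square algebra_simps)
  qed
  ultimately have l: "- 2 * y \<le> ln (1 - y)" by linarith
  have "real d * (- 2 * y) = - 1 / real k" unfolding y_def using assms by (simp add: field_simps)
  then have "exp (- 1 / real k) = exp (real d * (- 2 * y))" by simp
  also have "\<dots> \<le> exp (real d * ln (1 - y))" using l by (intro exp_le_cancel_iff[THEN iffD2] mult_left_mono) auto
  also have "\<dots> = exp (ln (1 - y)) ^ d" by (rule exp_of_nat_mult)
  also have "\<dots> = (1 - y) ^ d" using y0 by simp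
  finally show ?thesis unfolding y_def .
qed

lemma kds_finC: "kds_CNF k d s V C \<Longrightarrow> finite C"
proof -
  assume kds: "kds_CNF k d s V C"
  then have "C \<subseteq> Pow (V \<times> (UNIV :: bool set))"
    unfolding kds_CNF_def vbl_def by fastforce
  moreover have "finite (Pow (V \<times> (UNIV :: bool set)))" using kds unfolding kds_CNF_def by simp
  ultimately show ?thesis using finite_subset by blast
qed

theorem lemma3p5:
  fixes k d s :: nat and V :: "'v set" and C :: "'v clause set" and cs c' :: "'v clause"
  assumes "kds_CNF k d s V C"
    and "real k \<ge> log 2 (real d) + log 2 (real k) + log 2 (2 * exp 1) + real s"
    and "is_clause cs" and "card (vbl cs) = k" and "cs \<notin> C"
    and "c' \<in> C" and "vbl c' = vbl cs" and "c' \<noteq> cs"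
  shows "prob_forbidden V C cs \<ge> (1 - exp (1 / real k) / 2) ^ k"
proof -
  note kds = assms(1)
  have c'cl: "is_clause c'" "vbl c' \<subseteq> V" using kds assms(6) unfolding kds_CNF_def by auto
  have finC: "finite C" using kds_finC[OF kds] .
  have "\<exists>u\<in>vbl cs. fv c' u \<noteq> fv cs u"
  proof (rule ccontr)
    assume "\<not> (\<exists>u\<in>vbl cs. fv c' u \<noteq> fv cs u)"
    then have "\<forall>u\<in>vbl c'. fv c' u = fv cs u" using assms(7) by auto
    then have "c' = cs" by (rule clause_eq[OF c'cl(1) assms(3) assms(7)])
    with assms(8) show False ..
  qed
  then obtain v1 where v1: "v1 \<in> vbl cs" "fv c' v1 \<noteq> fv cs v1" by blast
  have k1: "k \<ge> 1"
  proof -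
    have "finite (vbl cs)" using assms(3) unfolding is_clause_def vbl_def by auto
    then show ?thesis using v1(1) assms(4) by (metis One_nat_def Suc_leI card_gt_0_iff empty_iff)
  qed
  have d1: "d \<ge> 1"
  proof -
    have vV: "v1 \<in> V" using v1 c'cl assms(7) by auto
    have "c' \<in> {c\<in>C. v1 \<in> vbl c}" using assms(6,7) v1 by auto
    moreover have "finite {c\<in>C. v1 \<in> vbl c}" using finC by auto
    ultimately have "card {c\<in>C. v1 \<in> vbl c} \<ge> 1" by (metis One_nat_def Suc_leI card_gt_0_iff empty_iff)
    moreover have "card {c\<in>C. v1 \<in> vbl c} \<le> d" using kds vV unfolding kds_CNF_def by auto
    ultimately show ?thesis by linarith
  qed
  have e2: "2 \<le> exp (1::real)" using exp_ge_add_one_self[of 1] by simp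
  have ld: "log 2 (real d) \<ge> 0" "log 2 (real k) \<ge> 0" using d1 k1 by auto
  have le: "log 2 (2 * exp 1) > 1"
  proof -
    have "log 2 (2 * exp 1) > log 2 2" using e2 by (subst log_less_cancel_iff) auto
    then show ?thesis by simp
  qed
  have logeq: "log 2 (real d) + log 2 (real k) + log 2 (2 * exp 1) = log 2 (2 * exp 1 * real d * real k)"
    using d1 k1 by (simp add: log_mult)
  have ks: "real k > 1 + real s" using assms(2) ld le by linarith
  then have sk: "s < k" and k2: "k \<ge> 2" by auto
  have "log 2 (2 * exp 1 * real d * real k) \<le> real (k - s)" using assms(2) logeq sk by simp
  then have "2 powr log 2 (2 * exp 1 * real d * real k) \<le> 2 powr real (k - s)"
    by (intro powr_mono) auto
  moreover have "2 powr log 2 (2 * exp 1 * real d * real k) = 2 * exp 1 * real d * real k"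
    using d1 k1 by (intro powr_log_cancel) auto
  ultimately have "2 * exp 1 * real d * real k \<le> 2 ^ (k - s)" by (simp add: powr_realpow)
  moreover have "real (4 * d * k) \<le> 2 * exp 1 * real d * real k"
    using e2 by (simp add: mult_right_mono)
  ultimately have num1: "real (4 * d * k) \<le> 2 ^ (k - s)" by linarith
  interpret setting k d s V C cs c' v1
    using kds assms(3,4,6,7) v1 d1 k2 sk num1 num2_lemma[OF d1 k1] by unfold_locales auto
  show ?thesis by (rule result)
qed

end
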